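(* Let $I$ be a nonempty open real interval, let $t\in\,]0,1[\,$, let $f,g:I\to\mathbb{R}$ be such that $f$ is positive everywhere on $I$ and $g/f$ is continuous and strictly monotone on $I$, and let $h:I\to\mathbb{R}$ be a continuous strictly monotone function. Then \[ \Big(\frac{g}{f}\Big)^{-1}\!\left(\frac{tg(x)+(1-t)g(y)}{tf(x)+(1-t)f(y)}\right)=h^{-1}\big(th(x)+(1-t)h(y)\big)\qquad\text{for all } x,y\in I \] holds if and only if there exists $p\in\mathbb{R}$ with $(t-\frac12)p=0$ such that $(f,g)\sim(S_p\circ h,C_p\circ h)$ on $I$.
   Context: For $p\in\mathbb{R}$, the functions $S_p,C_p:\mathbb{R}\to\mathbb{R}$ are defined by $S_p(x)=\sin(\sqrt{-p}\,x)$, $C_p(x)=\cos(\sqrt{-p}\,x)$ if $p<0$; $S_p(x)=x$, $C_p(x)=1$ if $p=0$; $S_p(x)=\sinh(\sqrt{p}\,x)$, $C_p(x)=\cosh(\sqrt{p}\,x)$ if $p>0$. Two pairs of functions $(f,g):I\to\mathbb{R}^2$ and $(u,v):I\to\mathbb{R}^2$ are called equivalent, written $(f,g)\sim(u,v)$, if there exist constants $a,b,c,d\in\mathbb{R}$ with $ad\neq cb$ such that $u=af+bg$ and $v=cf+dg$ on $I$. *)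

theory Defs
  imports "HOL-Analysis.Analysis"
begin

definition S_fun :: "real \<Rightarrow> real \<Rightarrow> real" where
  "S_fun p x = (if p < 0 then sin (sqrt (- p) * x) else if p = 0 then x else sinh (sqrt p * x))"

definition C_fun :: "real \<Rightarrow> real \<Rightarrow> real" where
  "C_fun p x = (if p < 0 then cos (sqrt (- p) * x) else if p = 0 then 1 else cosh (sqrt p * x))"

definition pair_equiv :: "real set \<Rightarrow> (real \<Rightarrow> real) \<Rightarrow> (real \<Rightarrow> real)
    \<Rightarrow> (real \<Rightarrow> real) \<Rightarrow> (real \<Rightarrow> real) \<Rightarrow> bool" where
  "pair_equiv I f g u v \<longleftrightarrow>
     (\<exists>a b c d. a * d \<noteq> c * b \<and>
        (\<forall>x\<in>I. u x = a * f x + b * g x \<and> v x = c * f x + d * g x))"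

end

theory Submission
  imports Defs
begin

lemma dyadic_const:
  fixes g :: "real \<Rightarrow> real"
  assumes xy: "x \<le> y" and L: "0 < L" and cont: "continuous_on {x..y} g"
    and grid: "\<And>n k. x + real k * L / 2^n \<le> y \<Longrightarrow> g (x + real k * L / 2^n) = g x"
  shows "g y = g x"
proof -
  define k where "k n = nat \<lfloor>(y-x)*2^n/L\<rfloor>" for n :: nat
  define z where "z n = x + real (k n) * L/2^n" for n :: nat
  have fl0: "0 \<le> \<lfloor>(y-x)*2^n/L\<rfloor>" for n
    using xy L by simp
  have kk: "real (k n) = of_int \<lfloor>(y-x)*2^n/L\<rfloor>" for n
    using fl0[of n] unfolding k_def by simp
  have le: "z n \<le> y" for n
  proof -
    have "real (k n) \<le> (y-x)*2^n/L" using kk[of n] by linarith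
    hence "real (k n) * L \<le> (y-x)*2^n" using L by (simp add: field_simps)
    hence "real (k n) * L / 2^n \<le> y - x" by (simp add: field_simps)
    thus ?thesis unfolding z_def by linarith
  qed
  have ge: "y - L/2^n \<le> z n" for n
  proof -
    have "(y-x)*2^n/L - 1 \<le> real (k n)" using kk[of n] by linarith
    hence "(y-x)*2^n - L \<le> real (k n) * L" using L by (simp add: field_simps)
    hence "((y-x)*2^n - L)/2^n \<le> real (k n) * L / 2^n" by (intro divide_right_mono) auto
    moreover have "((y-x)*2^n - L)/2^n = y - x - L/2^n" by (simp add: field_simps)
    ultimately have "y - x - L/2^n \<le> real (k n) * L / 2^n" by simp
    thus ?thesis unfolding z_def by linarith
  qed
  have zx: "x \<le> z n" for n unfolding z_def using L by simp
  have "(\<lambda>n. L / 2^n) \<longlonglongrightarrow> 0"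
    by (rule LIMSEQ_divide_realpow_zero) simp
  hence "(\<lambda>n. z n - y) \<longlonglongrightarrow> 0"
    apply (rule Lim_null_comparison[rotated])
    using le ge L by (auto intro!: always_eventually simp: abs_if) (smt (verit) le ge zero_less_power divide_pos_pos)+
  hence "(\<lambda>n. y + (z n - y)) \<longlonglongrightarrow> y + 0"
    by (intro tendsto_add tendsto_const)
  hence zl: "z \<longlonglongrightarrow> y" by simp
  have "(\<lambda>n. g (z n)) \<longlonglongrightarrow> g y"
    by (rule continuous_on_tendsto_compose[OF cont zl]) (use xy le zx in auto)
  moreover have "g (z n) = g x" for n unfolding z_def using grid le unfolding z_def by blast
  ultimately have "(\<lambda>n. g x) \<longlonglongrightarrow> g y" by simp
  thus ?thesis using LIMSEQ_unique tendsto_const by metis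
qed

lemma interval_between:
  fixes J :: "real set"
  assumes "is_interval J" "a \<in> J" "b \<in> J" "a \<le> x" "x \<le> b"
  shows "x \<in> J"
  using assms mem_is_interval_1_I by blast

lemma interval_comb:
  fixes J :: "real set"
  assumes "is_interval J" "u \<in> J" "v \<in> J" "0 \<le> s" "s \<le> 1"
  shows "s*u + (1-s) * v \<in> J"
proof -
  have "convex J" using assms(1) is_interval_convex by blast
  thus ?thesis using assms unfolding convex_def by auto
qed

lemma jensen_on_seg:
  fixes Q :: "real \<Rightarrow> real" and J :: "real set"
  assumes J: "is_interval J" and cont: "continuous_on J Q" and t0: "0 < t" and t1: "t < 1"
    and jen: "\<And>u v. u \<in> J \<Longrightarrow> v \<in> J \<Longrightarrow> Q (t*u+(1-t) * v) = t * Q u + (1-t) * Q v"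
    and ab: "a \<in> J" "b \<in> J" "a < b" and x: "a \<le> x" "x \<le> b"
  shows "Q x = Q a + (Q b - Q a)*(x-a)/(b-a)"
proof (rule ccontr)
  define R where "R z = Q z - (Q a + (Q b - Q a)*(z-a)/(b-a))" for z
  assume "Q x \<noteq> Q a + (Q b - Q a)*(x-a)/(b-a)"
  hence Rx: "R x \<noteq> 0" unfolding R_def by simp
  have sub: "{a..b} \<subseteq> J" using interval_between[OF J ab(1,2)] by auto
  have Rcont: "continuous_on {a..b} R" unfolding R_def
    by (intro continuous_intros continuous_on_subset[OF cont sub]) (use ab in auto)
  have Ra: "R a = 0" and Rb: "R b = 0" unfolding R_def using ab by auto
  have Rjen: "R (t*u+(1-t) * v) = t * R u + (1-t) * R v" if "u \<in> J" "v \<in> J" for u v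
  proof -
    define D where "D = (Q b - Q a)/(b-a)"
    have e: "(Q b - Q a)*z/(b-a) = D * z" for z unfolding D_def by simp
    have "D*((t*u+(1-t) * v)-a) = t*(D*(u-a)) + (1-t)*(D*(v-a))"
      by (simp add: algebra_simps)
    thus ?thesis unfolding R_def jen[OF that] e by (simp add: algebra_simps)
  qed
  define A where "A = {z \<in> {a..x}. R z = 0}"
  define B where "B = {z \<in> {x..b}. R z = 0}"
  have cA: "closed A" unfolding A_def
    by (rule continuous_closed_preimage_constant) (use Rcont x in \<open>auto intro: continuous_on_subset\<close>)
  have cB: "closed B" unfolding B_def
    by (rule continuous_closed_preimage_constant) (use Rcont x in \<open>auto intro: continuous_on_subset\<close>)
  have aA: "a \<in> A" unfolding A_def using Ra x by auto
  have bB: "b \<in> B" unfolding B_def using Rb x by auto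
  have bddA: "bdd_above A" unfolding A_def by (rule bdd_aboveI[of _ x]) auto
  have bddB: "bdd_below B" unfolding B_def by (rule bdd_belowI[of _ x]) auto
  define a1 where "a1 = Sup A"
  define b1 where "b1 = Inf B"
  have a1A: "a1 \<in> A" unfolding a1_def using closed_contains_Sup[OF _ bddA cA] aA by auto
  have b1B: "b1 \<in> B" unfolding b1_def using closed_contains_Inf[OF _ bddB cB] bB by auto
  have a1x: "a1 < x" using a1A Rx unfolding A_def by (cases "a1 = x") auto
  have b1x: "x < b1" using b1B Rx unfolding B_def by (cases "b1 = x") auto
  have a1J: "a1 \<in> J" and b1J: "b1 \<in> J" using a1A b1B sub x unfolding A_def B_def by auto
  define m where "m = t*a1 + (1-t)*b1"
  have p1: "0 < (1-t)*(b1-a1)" and p2: "0 < t*(b1-a1)" using a1x b1x t1 t0 by auto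
  have m1: "a1 < m" unfolding m_def using p1 by (simp add: algebra_simps)
  have m2: "m < b1" unfolding m_def using p2 by (simp add: algebra_simps)
  have Rm: "R m = 0" unfolding m_def using Rjen[OF a1J b1J] a1A b1B unfolding A_def B_def by simp
  show False
  proof (cases "m \<le> x")
    case True
    hence "m \<in> A" unfolding A_def using Rm m1 a1A unfolding A_def by auto
    hence "m \<le> a1" unfolding a1_def using bddA by (rule cSup_upper)
    thus False using m1 by simp
  next
    case False
    hence "m \<in> B" unfolding B_def using Rm m2 b1B unfolding B_def by auto
    hence "b1 \<le> m" unfolding b1_def using bddB by (rule cInf_lower)
    thus False using m2 by simp
  qed
qed

lemma jensen_affine:
  fixes Q :: "real \<Rightarrow> real" and J :: "real set"
  assumes J: "is_interval J" and cont: "continuous_on J Q" and t0: "0 < t" and t1: "t < 1"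
    and jen: "\<And>u v. u \<in> J \<Longrightarrow> v \<in> J \<Longrightarrow> Q (t*u+(1-t) * v) = t * Q u + (1-t) * Q v"
    and ab: "a \<in> J" "b \<in> J" "a < b"
  shows "\<exists>\<alpha> \<beta>. \<forall>x\<in>J. Q x = \<alpha> * x + \<beta>"
proof -
  define \<alpha> where "\<alpha> = (Q b - Q a)/(b-a)"
  have "Q x = \<alpha> * x + (Q a - \<alpha> * a)" if xJ: "x \<in> J" for x
  proof -
    define a' where "a' = min a x"
    define b' where "b' = max b x"
    have a'J: "a' \<in> J" and b'J: "b' \<in> J" unfolding a'_def b'_def using ab xJ by (auto simp: min_def max_def)
    have ab': "a' < b'" unfolding a'_def b'_def using ab by auto
    define c1 where "c1 = (Q b' - Q a')/(b'-a')"
    have eq: "Q z = Q a' + c1 * (z - a')" if "a' \<le> z" "z \<le> b'" for z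
      using jensen_on_seg[OF J cont t0 t1 jen a'J b'J ab' that] unfolding c1_def by simp
    have "Q a = Q a' + c1 * (a - a')" by (rule eq) (use ab in \<open>auto simp: a'_def b'_def\<close>)
    moreover have "Q b = Q a' + c1 * (b - a')" by (rule eq) (use ab in \<open>auto simp: a'_def b'_def\<close>)
    moreover have "Q x = Q a' + c1 * (x - a')" by (rule eq) (auto simp: a'_def b'_def)
    ultimately have "\<alpha> = c1" and "Q x = Q a + c1 * (x - a)" using ab unfolding \<alpha>_def
      by (auto simp: field_simps)
    thus ?thesis by (simp add: algebra_simps)
  qed
  thus ?thesis by blast
qed

lemma S_sum: "S_fun p (x-s) + S_fun p (x+s) = 2 * C_fun p s * S_fun p x"
  unfolding S_fun_def C_fun_def
  by (auto simp: right_diff_distrib distrib_left sin_add sin_diff sinh_add sinh_diff)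

lemma C_sum: "C_fun p (x-s) + C_fun p (x+s) = 2 * C_fun p s * C_fun p x"
  unfolding S_fun_def C_fun_def
  by (auto simp: right_diff_distrib distrib_left cos_add cos_diff cosh_add cosh_diff)

lemma SC_det: "S_fun p A * C_fun p B - C_fun p A * S_fun p B = S_fun p (A-B)"
  unfolding S_fun_def C_fun_def
  by (auto simp: right_diff_distrib sin_diff sinh_diff)

lemma S_odd: "S_fun p (-x) = - S_fun p x"
  unfolding S_fun_def by auto

lemma C_zero: "C_fun p 0 = 1"
  unfolding C_fun_def by auto

lemma S_cont: "continuous_on A (S_fun p)"
  unfolding S_fun_def by (cases "p < 0"; cases "p = 0") (auto intro!: continuous_intros)

lemma C_cont: "continuous_on A (C_fun p)"
  unfolding C_fun_def by (cases "p < 0"; cases "p = 0") (auto intro!: continuous_intros)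

lemma choose_p:
  fixes s0 \<gamma> :: real
  assumes s0: "0 < s0" and g: "0 < \<gamma>"
  shows "\<exists>p. C_fun p s0 = \<gamma> \<and> (\<forall>s. 0 \<le> s \<longrightarrow> s \<le> s0 \<longrightarrow> 0 < C_fun p s) \<and> S_fun p (2 * s0) \<noteq> 0"
proof (cases "\<gamma> < 1")
  case True
  define \<theta> where "\<theta> = arccos \<gamma>"
  have th0: "0 < \<theta>" unfolding \<theta>_def using arccos_lt_bounded[of \<gamma>] g True by auto
  have th1: "\<theta> < pi/2" unfolding \<theta>_def using arccos_less_arccos[of 0 \<gamma>] g True by (simp add: arccos_0)
  define p where "p = - ((\<theta>/s0)^2)"
  have pn: "p < 0" unfolding p_def using th0 s0 by simp
  have sq: "sqrt (- p) = \<theta>/s0" unfolding p_def using th0 s0 by simp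
  have "C_fun p s0 = \<gamma>" unfolding C_fun_def using pn sq s0 g True by (simp add: \<theta>_def cos_arccos)
  moreover have "0 < C_fun p s" if "0 \<le> s" "s \<le> s0" for s
  proof -
    have "\<theta>/s0 * s \<le> \<theta>" using that s0 th0 by (simp add: field_simps mult_left_le)
    moreover have "0 \<le> \<theta>/s0 * s" using that s0 th0 by simp
    ultimately have "- (pi/2) < \<theta>/s0 * s" "\<theta>/s0 * s < pi/2" using th1 by linarith+
    hence "0 < cos (\<theta>/s0 * s)" by (intro cos_gt_zero_pi)
    thus ?thesis unfolding C_fun_def using pn sq by simp
  qed
  moreover have "S_fun p (2 * s0) \<noteq> 0"
  proof -
    have "\<theta>/s0 * (2 * s0) = 2 * \<theta>" using s0 by simp
    moreover have "0 < sin (2 * \<theta>)" using th0 th1 by (intro sin_gt_zero) auto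
    ultimately show ?thesis unfolding S_fun_def using pn sq by simp
  qed
  ultimately show ?thesis by blast
next
  case False
  show ?thesis
  proof (cases "\<gamma> = 1")
    case True
    have "C_fun 0 s0 = \<gamma>" "\<forall>s. 0 \<le> s \<longrightarrow> s \<le> s0 \<longrightarrow> 0 < C_fun 0 s" "S_fun 0 (2 * s0) \<noteq> 0"
      unfolding C_fun_def S_fun_def using True s0 by auto
    thus ?thesis by blast
  next
    case False2: False
    define \<theta> where "\<theta> = arcosh \<gamma>"
    have th0: "0 < \<theta>" unfolding \<theta>_def using arcosh_real_gt_1_iff[of \<gamma>] False False2 by auto
    define p where "p = (\<theta>/s0)^2"
    have pn: "0 < p" unfolding p_def using th0 s0 by simp
    have sq: "sqrt p = \<theta>/s0" unfolding p_def using th0 s0 by simp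
    have "C_fun p s0 = \<gamma>" unfolding C_fun_def using pn sq s0 False by (simp add: \<theta>_def cosh_arcosh_real)
    moreover have "0 < C_fun p s" for s
      unfolding C_fun_def using pn by (simp add: cosh_real_pos)
    moreover have "S_fun p (2 * s0) \<noteq> 0"
      unfolding S_fun_def using pn sq th0 s0 by simp
    ultimately show ?thesis by blast
  qed
qed


locale core =
  fixes J :: "real set" and F G K :: "real \<Rightarrow> real" and t :: real and a0 b0 :: real
  assumes J: "is_interval J"
    and Fpos: "\<And>u. u \<in> J \<Longrightarrow> 0 < F u"
    and GKF: "\<And>u. u \<in> J \<Longrightarrow> G u = K u * F u"
    and Kinj: "inj_on K J"
    and Kcont: "continuous_on J K"
    and t0: "0 < t" and t1: "t < 1"
    and eqn: "\<And>u v. u \<in> J \<Longrightarrow> v \<in> J \<Longrightarrow>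
       t * G u + (1-t) * G v = K (t*u+(1-t) * v) * (t * F u + (1-t) * F v)"
    and a0: "a0 \<in> J" and b0: "b0 \<in> J" and ab0: "a0 < b0"
begin

lemma comb: "u \<in> J \<Longrightarrow> v \<in> J \<Longrightarrow> t*u+(1-t) * v \<in> J"
  using interval_comb[OF J, of u v t] t0 t1 by auto

lemma betw: "a \<in> J \<Longrightarrow> b \<in> J \<Longrightarrow> a \<le> x \<Longrightarrow> x \<le> b \<Longrightarrow> x \<in> J"
  using interval_between[OF J] by blast

lemma star: "u \<in> J \<Longrightarrow> v \<in> J \<Longrightarrow>
   t * F u * (K u - K (t*u+(1-t) * v)) = (1-t) * F v * (K (t*u+(1-t) * v) - K v)"
proof -
  assume uv: "u \<in> J" "v \<in> J"
  define W where "W = K (t*u+(1-t) * v)"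
  have "t * (K u * F u) + (1-t) * (K v * F v) = W * (t * F u + (1-t) * F v)"
    using eqn[OF uv] GKF[OF uv(1)] GKF[OF uv(2)] unfolding W_def by simp
  thus ?thesis unfolding W_def[symmetric] by (simp add: algebra_simps)
qed

lemma lin_indep:
  assumes "a \<in> J" "b \<in> J" "a \<noteq> b" "\<alpha> * F a + \<beta> * F b = 0" "\<alpha> * G a + \<beta> * G b = 0"
  shows "\<alpha> = 0 \<and> \<beta> = 0"
proof -
  have "K a \<noteq> K b" using Kinj assms(1-3) unfolding inj_on_def by blast
  have "\<alpha> * K a * F a + \<beta> * K b * F b = 0" using assms(5) GKF assms(1,2) by (simp add: algebra_simps)
  moreover have "K a * (\<alpha> * F a + \<beta> * F b) = 0" using assms(4) by simp
  moreover have "\<beta> * F b * (K b - K a) = (\<alpha> * K a * F a + \<beta> * K b * F b) - K a * (\<alpha> * F a + \<beta> * F b)"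
    by (simp add: algebra_simps)
  ultimately have "\<beta> * F b * (K b - K a) = 0" by simp
  moreover have "F b \<noteq> 0" "K b - K a \<noteq> 0" using \<open>K a \<noteq> K b\<close> Fpos[OF assms(2)] by auto
  ultimately have "\<beta> = 0" by simp
  thus ?thesis using assms(4) Fpos[OF assms(1)] by simp
qed

lemma F_cont: "continuous_on J F"
  unfolding continuous_on_eq_continuous_within
proof
  fix u0 assume u0: "u0 \<in> J"
  obtain v where v: "v \<in> J" "v \<noteq> u0" using a0 b0 ab0 by (cases "u0 = a0") auto
  define w where "w u = t*u+(1-t) * v" for u
  define \<phi> where "\<phi> u = (1-t) * F v * (K (w u) - K v) / (t * (K u - K (w u)))" for u
  have Kne: "K u \<noteq> K (w u)" if "u \<in> J" "u \<noteq> v" for u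
  proof
    assume "K u = K (w u)"
    moreover have "w u \<in> J" unfolding w_def using comb that v by auto
    ultimately have "u = w u" using Kinj that unfolding inj_on_def by blast
    hence "(1-t) * (v - u) = 0" unfolding w_def by (simp add: algebra_simps)
    thus False using that t1 by simp
  qed
  have eqphi: "F u = \<phi> u" if "u \<in> J" "u \<noteq> v" for u
  proof -
    have "t * F u * (K u - K (w u)) = (1-t) * F v * (K (w u) - K v)"
      using star[OF that(1) v(1)] unfolding w_def .
    moreover have "t * (K u - K (w u)) \<noteq> 0" using Kne[OF that] t0 by simp
    ultimately show ?thesis unfolding \<phi>_def by (simp add: field_simps)
  qed
  have cw: "continuous_on J (\<lambda>u. K (w u))"
    by (rule continuous_on_compose2[OF Kcont, of J w]) (auto simp: w_def comb v intro!: continuous_intros)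
  have c1: "continuous (at u0 within J) K" using Kcont u0 continuous_on_eq_continuous_within by blast
  have c2: "continuous (at u0 within J) (\<lambda>u. K (w u))" using cw u0 continuous_on_eq_continuous_within by blast
  have "continuous (at u0 within J) \<phi>" unfolding \<phi>_def
    using Kne[OF u0 v(2)[symmetric]] t0
    by (intro continuous_intros c1 c2) auto
  thus "continuous (at u0 within J) F"
  proof (rule continuous_transform_within[of _ _ _ "\<bar>u0 - v\<bar>"])
    show "0 < \<bar>u0 - v\<bar>" using v by simp
    show "u0 \<in> J" by fact
    fix x' assume "x' \<in> J" "dist x' u0 < \<bar>u0 - v\<bar>"
    hence "x' \<noteq> v" by (auto simp: dist_real_def)
    thus "\<phi> x' = F x'" using eqphi \<open>x' \<in> J\<close> by simp
  qed
qed

lemma G_cont: "continuous_on J G"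
proof -
  have "continuous_on J (\<lambda>u. K u * F u)" by (intro continuous_intros Kcont F_cont)
  thus ?thesis by (rule continuous_on_eq) (simp add: GKF)
qed

definition lam where "lam u v = (t * F u + (1-t) * F v) / F (t*u+(1-t) * v)"

lemma lam_pos: "u \<in> J \<Longrightarrow> v \<in> J \<Longrightarrow> 0 < lam u v"
  unfolding lam_def using Fpos[of u] Fpos[of v] Fpos[OF comb] t0 t1
  by (intro divide_pos_pos add_pos_pos mult_pos_pos) auto

lemma vec:
  assumes "Q = F \<or> Q = G" "a \<in> J" "b \<in> J"
  shows "t * Q a + (1-t) * Q b = lam a b * Q (t*a+(1-t) * b)"
proof -
  have Fw: "F (t*a+(1-t) * b) \<noteq> 0" using Fpos[OF comb[OF assms(2,3)]] by simp
  have vF: "t * F a + (1-t) * F b = lam a b * F (t*a+(1-t) * b)"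
    unfolding lam_def using Fw by simp
  show ?thesis
  proof (cases "Q = F")
    case True thus ?thesis using vF by simp
  next
    case False
    hence Q: "Q = G" using assms(1) by simp
    have "lam a b * G (t*a+(1-t) * b) = K (t*a+(1-t) * b) * (lam a b * F (t*a+(1-t) * b))"
      using GKF[OF comb[OF assms(2,3)]] by simp
    also have "\<dots> = t * G a + (1-t) * G b" using vF eqn[OF assms(2,3)] by simp
    finally show ?thesis using Q by simp
  qed
qed

lemma lin_indep2:
  assumes "a \<in> J" "b \<in> J" "a \<noteq> b" "\<And>Q. Q = F \<or> Q = G \<Longrightarrow> \<alpha> * Q a + \<beta> * Q b = 0"
  shows "\<alpha> = 0 \<and> \<beta> = 0"
  using lin_indep[OF assms(1-3)] assms(4) by blast

lemma alg6:
  fixes l1 l2 l3 l4 r q x y z1 z2 :: real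
  assumes "l4*(r*x + q*z2) = l3*(r*z1 + q*x)" "r*y + q*x = l2*z2" "r*x+q*y = l1*z1"
  shows "(l4*l1*(r*l2+q^2) - l3*l2*(r^2+q*l1))*x + (l4*l1*q*r - l3*l2*r*q)*y = 0"
proof -
  have "(l4*l1*(r*l2+q^2) - l3*l2*(r^2+q*l1))*x + (l4*l1*q*r - l3*l2*r*q)*y
     = l1*l2*(l4*(r*x + q*z2) - l3*(r*z1 + q*x)) + l4*l1*q*(r*y + q*x - l2*z2)
       - l3*l2*r*(r*x+q*y - l1*z1)"
    by (simp add: algebra_simps power2_eq_square)
  thus ?thesis using assms by simp
qed

lemma key:
  assumes u: "u \<in> J" and v: "v \<in> J" and uv: "u \<noteq> v"
  shows "t * (lam v u - 1) = (1-t) * (lam u v - 1)"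
proof -
  define q where "q = 1 - t"
  define w1 where "w1 = t*u + q * v"
  define w2 where "w2 = t * v + q * u"
  define y where "y = t*u + q*w2"
  have w1J: "w1 \<in> J" unfolding w1_def q_def using comb u v by blast
  have w2J: "w2 \<in> J" unfolding w2_def q_def using comb u v by blast
  have y2: "t*w1 + q*u = y" unfolding y_def w1_def w2_def q_def by (simp add: algebra_simps power2_eq_square)
  define l1 where "l1 = lam u v"
  define l2 where "l2 = lam v u"
  define l3 where "l3 = lam u w2"
  define l4 where "l4 = lam w1 u"
  have rel: "(l4*l1*(t*l2+q^2) - l3*l2*(t^2+q*l1)) * Q u + (l4*l1*q*t - l3*l2*t*q) * Q v = 0"
    if Q: "Q = F \<or> Q = G" for Q
  proof (rule alg6)
    have i3: "t*Q u + q*Q w2 = l3 * Q y" using vec[OF Q u w2J] unfolding l3_def y_def q_def .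
    have i4: "t*Q w1 + q*Q u = l4 * Q y" using vec[OF Q w1J u] y2 unfolding l4_def q_def by simp
    show "l4*(t*Q u + q*Q w2) = l3*(t*Q w1 + q*Q u)" unfolding i3 i4 by simp
    show "t*Q v + q*Q u = l2*Q w2" using vec[OF Q v u] unfolding l2_def w2_def q_def .
    show "t*Q u + q*Q v = l1*Q w1" using vec[OF Q u v] unfolding l1_def w1_def q_def .
  qed
  have AB: "l4*l1*(t*l2+q^2) - l3*l2*(t^2+q*l1) = 0 \<and> l4*l1*q*t - l3*l2*t*q = 0"
    by (rule lin_indep2[OF u v uv rel])
  have tq: "t * q \<noteq> 0" unfolding q_def using t0 t1 by simp
  have "(l4*l1 - l3*l2) * (t*q) = 0" using AB by (simp add: algebra_simps)
  hence e: "l3*l2 = l4*l1" using tq by simp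
  have "l4*l1*((t*l2+q^2) - (t^2+q*l1)) = (l4*l1*(t*l2+q^2) - l3*l2*(t^2+q*l1)) + (l3*l2 - l4*l1)*(t^2+q*l1)"
    by (simp add: algebra_simps)
  hence "l4*l1*((t*l2+q^2) - (t^2+q*l1)) = 0" using AB e by simp
  moreover have "l4*l1 \<noteq> 0" unfolding l4_def l1_def using lam_pos[OF u v] lam_pos[OF w1J u] by simp
  ultimately have "(t*l2+q^2) - (t^2+q*l1) = 0" by simp
  thus ?thesis unfolding q_def l1_def l2_def by (simp add: algebra_simps power2_eq_square)
qed

lemma lam_one:
  assumes "t \<noteq> 1/2" "u \<in> J" "v \<in> J"
  shows "lam u v = 1"
proof (cases "u = v")
  case True
  thus ?thesis unfolding lam_def using Fpos[OF assms(2)] by (simp add: algebra_simps)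
next
  case False
  have e1: "t * (lam v u - 1) = (1-t) * (lam u v - 1)" using key[OF assms(2,3) False] .
  have e2: "t * (lam u v - 1) = (1-t) * (lam v u - 1)" using key[OF assms(3,2)] False by auto
  have "(2*t - 1) * (lam u v - 1) = 0"
  proof -
    have "lam v u - lam u v = (t*(lam v u - 1) - (1-t)*(lam u v - 1)) - (t*(lam u v - 1) - (1-t)*(lam v u - 1))"
      by (simp add: algebra_simps)
    hence "(lam v u - 1) = (lam u v - 1)" using e1 e2 by simp
    thus ?thesis using e2 by (simp add: algebra_simps)
  qed
  moreover have "2*t - 1 \<noteq> 0" using assms(1) by simp
  ultimately show ?thesis by simp
qed

lemma case_not_half:
  assumes "t \<noteq> 1/2"
  shows "\<exists>\<alpha>1 \<beta>1 \<alpha>2 \<beta>2. \<forall>u\<in>J. F u = \<alpha>1 * S_fun 0 u + \<beta>1 * C_fun 0 u \<and>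
                                   G u = \<alpha>2 * S_fun 0 u + \<beta>2 * C_fun 0 u"
proof -
  have jF: "F (t*u+(1-t) * v) = t * F u + (1-t) * F v" if "u \<in> J" "v \<in> J" for u v
    using vec[of F, OF _ that] lam_one[OF assms that] by simp
  have jG: "G (t*u+(1-t) * v) = t * G u + (1-t) * G v" if "u \<in> J" "v \<in> J" for u v
    using vec[of G, OF _ that] lam_one[OF assms that] by simp
  obtain \<alpha>1 \<beta>1 where 1: "\<forall>x\<in>J. F x = \<alpha>1 * x + \<beta>1"
    using jensen_affine[OF J F_cont t0 t1 jF a0 b0 ab0] by blast
  obtain \<alpha>2 \<beta>2 where 2: "\<forall>x\<in>J. G x = \<alpha>2 * x + \<beta>2"
    using jensen_affine[OF J G_cont t0 t1 jG a0 b0 ab0] by blast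
  show ?thesis using 1 2 unfolding S_fun_def C_fun_def by auto
qed

end

locale half = core +
  assumes th: "t = 1/2"
begin

definition cc where "cc x s = (F (x-s) + F (x+s)) / F x"

lemma half_comb: "t * A + (1-t) * B = (A + B) / 2"
  by (subst th)+ simp

lemma mid_in: "x - s \<in> J \<Longrightarrow> x + s \<in> J \<Longrightarrow> x \<in> J"
  using comb[of "x-s" "x+s"] unfolding half_comb by simp

lemma relc:
  assumes Q: "Q = F \<or> Q = G" and a: "x - s \<in> J" and b: "x + s \<in> J"
  shows "Q (x-s) + Q (x+s) = cc x s * Q x"
proof -
  have m: "t*(x-s)+(1-t) * (x+s) = x" unfolding half_comb by simp
  have vQ: "Q (x-s) + Q (x+s) = 2 * lam (x-s) (x+s) * Q x"
    using vec[OF Q a b] unfolding m half_comb by simp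
  have vF: "F (x-s) + F (x+s) = 2 * lam (x-s) (x+s) * F x"
    using vec[of F, OF _ a b] unfolding m half_comb by simp
  have "cc x s = 2 * lam (x-s) (x+s)" unfolding cc_def vF using Fpos[OF mid_in[OF a b]] by simp
  thus ?thesis using vQ by simp
qed

lemma cc_pos: "x - s \<in> J \<Longrightarrow> x + s \<in> J \<Longrightarrow> 0 < cc x s"
  unfolding cc_def using Fpos mid_in by (simp add: add_pos_pos)

lemma alg_split:
  fixes cm cp c1 c2 A B W P M :: real
  assumes "M + W = cm * A" "W + P = cp * B" "M + P = c2 * W" "A + B = c1 * W"
  shows "(c2 + 2 - c1*cm) * A + (c2 + 2 - c1*cp) * B = 0"
proof -
  have "(c2 + 2 - c1*cm) * A + (c2 + 2 - c1*cp) * B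
      = (c2+2)*(A + B - c1*W) - c1*(cm*A - (M + W)) - c1*(cp*B - (W+P)) + c1*(c2*W - (M + P))"
    by (simp add: algebra_simps)
  thus ?thesis using assms by simp
qed

lemma split:
  assumes s: "0 < s" and a: "w - 2* s \<in> J" and b: "w + 2* s \<in> J"
  shows "cc (w-s) s = cc (w+s) s \<and> cc w (2* s) + 2 = cc w s * cc (w+s) s"
proof -
  have wJ: "w \<in> J" and w1: "w - s \<in> J" and w2: "w + s \<in> J" using betw[OF a b] s by auto
  have rel: "(cc w (2* s) + 2 - cc w s * cc (w-s) s) * Q (w-s) + (cc w (2* s) + 2 - cc w s * cc (w+s) s) * Q (w+s) = 0"
    if Q: "Q = F \<or> Q = G" for Q
  proof (rule alg_split)
    show "Q (w - 2* s) + Q w = cc (w-s) s * Q (w-s)"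
      using relc[OF Q, of "w-s" s] a wJ by (simp add: algebra_simps)
    show "Q w + Q (w + 2* s) = cc (w+s) s * Q (w+s)"
      using relc[OF Q, of "w+s" s] b wJ by (simp add: algebra_simps)
    show "Q (w - 2* s) + Q (w + 2* s) = cc w (2* s) * Q w"
      using relc[OF Q a b] .
    show "Q (w-s) + Q (w+s) = cc w s * Q w"
      using relc[OF Q w1 w2] .
  qed
  have z: "cc w (2* s) + 2 - cc w s * cc (w-s) s = 0 \<and> cc w (2* s) + 2 - cc w s * cc (w+s) s = 0"
    by (rule lin_indep2[OF w1 w2 _ rel]) (use s in auto)
  hence "cc w s * cc (w-s) s = cc w s * cc (w+s) s" by linarith
  moreover have "cc w s \<noteq> 0" using cc_pos[OF w1 w2] by simp
  ultimately have "cc (w-s) s = cc (w+s) s" by (metis mult_left_cancel)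
  thus ?thesis using z by linarith
qed

lemma per:
  assumes sg: "0 < \<sigma>" and a: "x - \<sigma> \<in> J" and b: "x + 3 * \<sigma> / 2 \<in> J"
  shows "cc x \<sigma> = cc (x + \<sigma>/2) \<sigma>"
proof -
  define s where "s = \<sigma>/2"
  have s: "0 < s" and sig: "\<sigma> = 2 * s" unfolding s_def using sg by auto
  have A: "x - 2 * s \<in> J" using a sig by simp
  have B: "x + 3 * s \<in> J" using b sig by (simp add: algebra_simps)
  have C1: "x + 2 * s \<in> J" using betw[OF A B] s by simp
  have C2: "x + s - 2 * s \<in> J" using betw[OF A B] s by simp
  have C3: "x + s + 2 * s \<in> J" using B by (simp add: algebra_simps)
  have e1: "cc x (2 * s) + 2 = cc x s * cc (x+s) s" using split[OF s A C1] by simp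
  have e2: "cc (x+s-s) s = cc (x+s+s) s \<and> cc (x+s) (2 * s) + 2 = cc (x+s) s * cc (x+s+s) s"
    using split[OF s C2 C3] .
  have "cc (x+s) (2 * s) = cc x (2 * s)" using e1 e2 by (simp add: algebra_simps)
  moreover have "x + \<sigma>/2 = x + s" by (simp add: s_def)
  moreover have "2 * s = \<sigma>" using sig by simp
  ultimately show ?thesis by metis
qed

lemma per_n:
  "\<forall>\<sigma> x. 0 < \<sigma> \<longrightarrow> x - \<sigma> \<in> J \<longrightarrow> x + \<sigma>/2^(Suc n) + \<sigma> \<in> J \<longrightarrow>
      cc x \<sigma> = cc (x + \<sigma>/2^(Suc n)) \<sigma>"
proof (induction n)
  case 0
  show ?case
  proof (intro allI impI)
    fix \<sigma> x :: real assume "0 < \<sigma>" "x - \<sigma> \<in> J" "x + \<sigma>/2^(Suc 0) + \<sigma> \<in> J"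
    thus "cc x \<sigma> = cc (x + \<sigma>/2^(Suc 0)) \<sigma>"
      using per[of \<sigma> x] by (simp add: algebra_simps)
  qed
next
  case (Suc n)
  show ?case
  proof (intro allI impI)
    fix \<sigma> x :: real assume sg: "0 < \<sigma>" and a: "x - \<sigma> \<in> J" and b: "x + \<sigma>/2^(Suc (Suc n)) + \<sigma> \<in> J"
    define \<rho> where "\<rho> = \<sigma>/2^(Suc (Suc n))"
    have \<rho>: "0 < \<rho>" unfolding \<rho>_def using sg by simp
    have \<rho>2: "(\<sigma>/2)/2^(Suc n) = \<rho>" unfolding \<rho>_def by simp
    have b': "x + \<rho> + \<sigma> \<in> J" using b unfolding \<rho>_def .
    have s2: "0 < \<sigma>/2" using sg by simp
    have "x + 2*(\<sigma>/2) \<in> J" using betw[OF a b'] \<rho> sg by simp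
    hence e1: "cc x (2*(\<sigma>/2)) + 2 = cc x (\<sigma>/2) * cc (x+\<sigma>/2) (\<sigma>/2)"
      using split[OF s2, of x] a by simp
    have "x + \<rho> - 2*(\<sigma>/2) \<in> J" using betw[OF a b'] \<rho> sg by simp
    moreover have "x + \<rho> + 2*(\<sigma>/2) \<in> J" using b' by simp
    ultimately have e2: "cc (x+\<rho>) (2*(\<sigma>/2)) + 2 = cc (x+\<rho>) (\<sigma>/2) * cc (x+\<rho>+\<sigma>/2) (\<sigma>/2)"
      using split[OF s2, of "x+\<rho>"] by simp
    have i1: "cc x (\<sigma>/2) = cc (x + \<rho>) (\<sigma>/2)"
    proof -
      have "x - \<sigma>/2 \<in> J" using betw[OF a b'] \<rho> sg by simp
      moreover have "x + (\<sigma>/2)/2^(Suc n) + \<sigma>/2 \<in> J" unfolding \<rho>2 using betw[OF a b'] \<rho> sg by simp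
      ultimately show ?thesis using Suc.IH[rule_format, OF s2, of x] unfolding \<rho>2 by simp
    qed
    have i2: "cc (x + \<sigma>/2) (\<sigma>/2) = cc (x + \<sigma>/2 + \<rho>) (\<sigma>/2)"
    proof -
      have "x + \<sigma>/2 - \<sigma>/2 \<in> J" using betw[OF a b'] \<rho> sg by simp
      moreover have "x + \<sigma>/2 + (\<sigma>/2)/2^(Suc n) + \<sigma>/2 \<in> J" unfolding \<rho>2 using b'
        by (simp add: algebra_simps)
      ultimately show ?thesis using Suc.IH[rule_format, OF s2, of "x + \<sigma>/2"] unfolding \<rho>2 by simp
    qed
    have "cc x \<sigma> = cc (x + \<rho>) \<sigma>"
      using e1 e2 i1 i2 by (simp add: algebra_simps)
    thus "cc x \<sigma> = cc (x + \<sigma>/2^(Suc (Suc n))) \<sigma>" unfolding \<rho>_def .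
  qed
qed

lemma cc_const_le:
  assumes sg: "0 < \<sigma>" and xy: "x \<le> y" and a: "x - \<sigma> \<in> J" and b: "y + \<sigma> \<in> J"
  shows "cc y \<sigma> = cc x \<sigma>"
proof (rule dyadic_const[OF xy, of "\<sigma>/2"])
  show "0 < \<sigma>/2" using sg by simp
  have inJ: "z \<in> J" if "x - \<sigma> \<le> z" "z \<le> y + \<sigma>" for z using betw[OF a b] that by blast
  have c1: "continuous_on {x..y} (\<lambda>z. F (z - \<sigma>))"
    by (rule continuous_on_compose2[OF F_cont]) (use sg in \<open>auto intro!: continuous_intros inJ\<close>)
  have c2: "continuous_on {x..y} (\<lambda>z. F (z + \<sigma>))"
    by (rule continuous_on_compose2[OF F_cont]) (use sg in \<open>auto intro!: continuous_intros inJ\<close>)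
  have c3: "continuous_on {x..y} F"
    by (rule continuous_on_subset[OF F_cont]) (use sg in \<open>auto intro!: inJ\<close>)
  show "continuous_on {x..y} (\<lambda>z. cc z \<sigma>)" unfolding cc_def
    using Fpos inJ sg by (intro continuous_intros c1 c2 c3) (auto simp: less_imp_neq[symmetric])
  fix n k assume "x + real k * (\<sigma>/2) / 2^n \<le> y"
  thus "cc (x + real k * (\<sigma>/2) / 2^n) \<sigma> = cc x \<sigma>"
  proof (induction k)
    case 0 show ?case by simp
  next
    case (Suc k)
    define z where "z = x + real k * (\<sigma>/2) / 2^n"
    have st: "x + real (Suc k) * (\<sigma>/2) / 2^n = z + \<sigma>/2^(Suc n)" unfolding z_def by (simp add: field_simps)
    have zle: "z \<le> y" using Suc.prems unfolding st using sg by (smt (verit) divide_pos_pos zero_less_power)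
    have zx: "x \<le> z" unfolding z_def using sg by simp
    have "cc z \<sigma> = cc (z + \<sigma>/2^(Suc n)) \<sigma>"
      using per_n[of n] sg inJ zle zx Suc.prems unfolding st
      by (smt (verit) divide_pos_pos zero_less_power)
    thus ?case using Suc.IH zle unfolding z_def st[unfolded z_def] by simp
  qed
qed

lemma cc_const:
  assumes sg: "0 < \<sigma>" and "x - \<sigma> \<in> J" "x + \<sigma> \<in> J" "y - \<sigma> \<in> J" "y + \<sigma> \<in> J"
  shows "cc y \<sigma> = cc x \<sigma>"
  using cc_const_le[OF sg, of x y] cc_const_le[OF sg, of y x] assms by (cases "x \<le> y") auto

end

context half begin

definition s0 where "s0 = (b0 - a0)/2"
definition m0 where "m0 = a0 + s0"
definition CC where "CC s = cc m0 s"

lemma s0_pos: "0 < s0" unfolding s0_def using ab0 by simp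

lemma m0_in: "0 \<le> s \<Longrightarrow> s \<le> s0 \<Longrightarrow> m0 - s \<in> J \<and> m0 + s \<in> J"
proof -
  assume a: "0 \<le> s" "s \<le> s0"
  have "a0 \<le> m0 - s" using a ab0 unfolding m0_def s0_def by (auto simp: field_simps)
  moreover have "m0 - s \<le> b0" using a ab0 unfolding m0_def s0_def by (auto simp: field_simps)
  moreover have "a0 \<le> m0 + s" using a ab0 unfolding m0_def s0_def by (auto simp: field_simps)
  moreover have "m0 + s \<le> b0" using a ab0 unfolding m0_def s0_def by (auto simp: field_simps)
  ultimately show ?thesis using betw[OF a0 b0] by blast
qed

lemma Crel:
  assumes "0 < s" "s \<le> s0" "x - s \<in> J" "x + s \<in> J" "Q = F \<or> Q = G"
  shows "Q (x-s) + Q (x+s) = CC s * Q x"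
proof -
  have "cc x s = cc m0 s" using cc_const[of s m0 x] m0_in[of s] assms by auto
  thus ?thesis using relc[OF assms(5,3,4)] unfolding CC_def by simp
qed

lemma CC_pos: "0 < s \<Longrightarrow> s \<le> s0 \<Longrightarrow> 0 < CC s"
  unfolding CC_def using cc_pos m0_in by auto

lemma CC_double:
  assumes s: "0 < s" and s2: "2 * s \<le> s0"
  shows "CC (2 * s) + 2 = (CC s)^2"
proof -
  have a: "m0 - 2 * s \<in> J" and b: "m0 + 2 * s \<in> J" using m0_in[of "2 * s"] s s2 by auto
  have e: "cc m0 (2 * s) + 2 = cc m0 s * cc (m0+s) s" using split[OF s a b] by simp
  have "cc (m0+s) s = cc m0 s"
    using cc_const[OF s, of m0 "m0+s"] m0_in[of s] m0_in[of 0] s s2 b s0_pos by (simp add: algebra_simps)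
  thus ?thesis using e unfolding CC_def by (simp add: power2_eq_square)
qed

lemma rep:
  assumes Q: "Q = F \<or> Q = G"
    and p1: "2 * C_fun p s0 = CC s0"
    and p2: "\<And>s. 0 \<le> s \<Longrightarrow> s \<le> s0 \<Longrightarrow> 0 < C_fun p s"
    and p3: "S_fun p (2 * s0) \<noteq> 0"
  shows "\<exists>\<alpha> \<beta>. \<forall>x\<in>J. Q x = \<alpha> * S_fun p x + \<beta> * C_fun p x"
proof -
  have match: "CC (s0/2^n) = 2 * C_fun p (s0/2^n)" for n
  proof (induction n)
    case 0 thus ?case using p1 by simp
  next
    case (Suc n)
    define s where "s = s0/2^(Suc n)"
    have s: "0 < s" unfolding s_def using s0_pos by simp
    have ss: "2 * s = s0/2^n" unfolding s_def by simp
    have sle: "2 * s \<le> s0" unfolding ss using s0_pos by (simp add: divide_le_eq)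
    have "(CC s)^2 = CC (2 * s) + 2" using CC_double[OF s sle] by simp
    also have "\<dots> = 2 * C_fun p (2 * s) + 2" using Suc.IH ss by simp
    also have "C_fun p (2 * s) = 2 * (C_fun p s)^2 - 1"
      using C_sum[of p s s] C_zero[of p] by (simp add: power2_eq_square)
    finally have "(CC s)^2 = (2 * C_fun p s)^2" by (simp add: power2_eq_square)
    moreover have "0 \<le> CC s" using CC_pos[OF s] sle s by simp
    moreover have "0 \<le> 2 * C_fun p s" using p2[of s] sle s by simp
    ultimately have "CC s = 2 * C_fun p s" using power2_eq_iff_nonneg by blast
    thus ?case unfolding s_def .
  qed
  define \<Delta> where "\<Delta> = S_fun p b0 * C_fun p a0 - C_fun p b0 * S_fun p a0"
  have "2 * s0 = b0 - a0" unfolding s0_def by simp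
  hence \<Delta>: "\<Delta> \<noteq> 0" unfolding \<Delta>_def SC_det using p3 by simp
  define \<alpha> where "\<alpha> = (Q b0 * C_fun p a0 - Q a0 * C_fun p b0) / \<Delta>"
  define \<beta> where "\<beta> = (Q a0 * S_fun p b0 - Q b0 * S_fun p a0) / \<Delta>"
  define \<psi> where "\<psi> x = \<alpha> * S_fun p x + \<beta> * C_fun p x" for x
  have \<psi>a: "\<psi> a0 = Q a0"
  proof -
    have "\<psi> a0 = ((Q b0 * C_fun p a0 - Q a0 * C_fun p b0) * S_fun p a0 + (Q a0 * S_fun p b0 - Q b0 * S_fun p a0) * C_fun p a0) / \<Delta>"
      unfolding \<psi>_def \<alpha>_def \<beta>_def by (simp add: add_divide_distrib)
    also have "\<dots> = Q a0 * \<Delta> / \<Delta>" unfolding \<Delta>_def by (simp add: algebra_simps)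
    finally show ?thesis using \<Delta> by simp
  qed
  have \<psi>b: "\<psi> b0 = Q b0"
  proof -
    have "\<psi> b0 = ((Q b0 * C_fun p a0 - Q a0 * C_fun p b0) * S_fun p b0 + (Q a0 * S_fun p b0 - Q b0 * S_fun p a0) * C_fun p b0) / \<Delta>"
      unfolding \<psi>_def \<alpha>_def \<beta>_def by (simp add: add_divide_distrib)
    also have "\<dots> = Q b0 * \<Delta> / \<Delta>" unfolding \<Delta>_def by (simp add: algebra_simps)
    finally show ?thesis using \<Delta> by simp
  qed
  have \<psi>rel: "\<psi> (x-s) + \<psi> (x+s) = 2 * C_fun p s * \<psi> x" for x s
  proof -
    have "\<psi> (x-s) + \<psi> (x+s) = \<alpha> * (S_fun p (x-s) + S_fun p (x+s)) + \<beta> * (C_fun p (x-s) + C_fun p (x+s))"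
      unfolding \<psi>_def by (simp add: algebra_simps)
    also have "\<dots> = 2 * C_fun p s * \<psi> x" unfolding S_sum C_sum \<psi>_def by (simp add: algebra_simps)
    finally show ?thesis .
  qed
  have \<psi>cont: "continuous_on A \<psi>" for A unfolding \<psi>_def by (intro continuous_intros S_cont C_cont)
  have Qcont: "continuous_on J Q" using Q F_cont G_cont by auto
  define L where "L = b0 - a0"
  have L: "0 < L" unfolding L_def using ab0 by simp
  have grid: "\<forall>k. k \<le> 2^n \<longrightarrow> Q (a0 + real k * L / 2^n) = \<psi> (a0 + real k * L / 2^n)" for n
  proof (induction n)
    case 0
    show ?case
    proof (intro allI impI)
      fix k :: nat assume "k \<le> 2^0"
      hence "k = 0 \<or> k = 1" by auto
      thus "Q (a0 + real k * L / 2^0) = \<psi> (a0 + real k * L / 2^0)"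
        using \<psi>a \<psi>b unfolding L_def by auto
    qed
  next
    case (Suc n)
    show ?case
    proof (intro allI impI)
      fix k :: nat assume k: "k \<le> 2^Suc n"
      show "Q (a0 + real k * L / 2^Suc n) = \<psi> (a0 + real k * L / 2^Suc n)"
      proof (cases "even k")
        case True
        then obtain j where j: "k = 2 * j" by (rule evenE)
        have "j \<le> 2^n" using k j by simp
        moreover have "a0 + real k * L / 2^Suc n = a0 + real j * L / 2^n" using j by simp
        ultimately show ?thesis using Suc.IH by simp
      next
        case False
        then obtain j where j: "k = 2 * j + 1" by (rule oddE)
        have jn: "j < 2^n" using k j by simp
        define s where "s = L / 2^Suc n"
        define x where "x = a0 + real k * L / 2^Suc n"
        have s: "0 < s" unfolding s_def using L by simp
        have ss: "s = s0/2^n" unfolding s_def L_def s0_def by simp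
        have sle: "s \<le> s0" unfolding ss using s0_pos by (simp add: divide_le_eq)
        have x1: "x - s = a0 + real j * L / 2^n" unfolding x_def s_def j by (simp add: field_simps)
        have x2: "x + s = a0 + real (j+1) * L / 2^n" unfolding x_def s_def j by (simp add: field_simps)
        have inJ: "a0 + real i * L / 2^n \<in> J" if "i \<le> 2^n" for i
        proof (rule betw[OF a0 b0])
          show "a0 \<le> a0 + real i * L / 2^n" using L by simp
          have "real i \<le> 2^n" using that by (metis of_nat_le_iff of_nat_numeral of_nat_power)
          hence "real i * L \<le> 2^n * L" using L by simp
          hence "real i * L / 2^n \<le> L" by (simp add: divide_le_eq mult.commute)
          thus "a0 + real i * L / 2^n \<le> b0" unfolding L_def by simp
        qed
        have xs1: "x - s \<in> J" unfolding x1 using inJ jn by simp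
        have xs2: "x + s \<in> J" unfolding x2 using inJ[of "j+1"] jn by simp
        have eQ: "Q (x-s) + Q (x+s) = CC s * Q x" using Crel[OF s sle xs1 xs2 Q] .
        have e\<psi>: "\<psi> (x-s) + \<psi> (x+s) = CC s * \<psi> x" using \<psi>rel[of x s] match[of n] ss by simp
        have "Q (x-s) = \<psi> (x-s)" unfolding x1 using Suc.IH jn by simp
        moreover have "Q (x+s) = \<psi> (x+s)" unfolding x2 using Suc.IH[rule_format, of "j+1"] jn by simp
        ultimately have "CC s * Q x = CC s * \<psi> x" using eQ e\<psi> by linarith
        moreover have "CC s \<noteq> 0" using CC_pos[OF s sle] by simp
        ultimately show ?thesis unfolding x_def by simp
      qed
    qed
  qed
  have seg: "Q y = \<psi> y" if y: "a0 \<le> y" "y \<le> b0" for y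
  proof -
    have "(\<lambda>z. Q z - \<psi> z) y = (\<lambda>z. Q z - \<psi> z) a0"
    proof (rule dyadic_const[OF y(1) L])
      have "{a0..y} \<subseteq> J" using betw[OF a0 b0] y by auto
      thus "continuous_on {a0..y} (\<lambda>z. Q z - \<psi> z)"
        by (intro continuous_intros continuous_on_subset[OF Qcont] \<psi>cont)
      fix n k assume le: "a0 + real k * L / 2^n \<le> y"
      have "real k * L / 2^n \<le> L" using le y unfolding L_def by simp
      hence "real k * L \<le> 2^n * L" by (simp add: divide_le_eq mult.commute)
      hence "real k \<le> 2^n" using L by simp
      hence "k \<le> 2^n" by (metis of_nat_le_iff of_nat_numeral of_nat_power)
      thus "Q (a0 + real k * L / 2^n) - \<psi> (a0 + real k * L / 2^n) = Q a0 - \<psi> a0"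
        using grid \<psi>a by simp
    qed
    thus ?thesis using \<psi>a by simp
  qed
  have right: "\<forall>y\<in>J. a0 \<le> y \<longrightarrow> y \<le> b0 + real n * s0 \<longrightarrow> Q y = \<psi> y" for n
  proof (induction n)
    case 0 thus ?case using seg by simp
  next
    case (Suc n)
    show ?case
    proof (intro ballI impI)
      fix y assume yJ: "y \<in> J" and ya: "a0 \<le> y" and yb: "y \<le> b0 + real (Suc n) * s0"
      show "Q y = \<psi> y"
      proof (cases "y \<le> b0 + real n * s0")
        case True thus ?thesis using Suc.IH yJ ya by simp
      next
        case False
        define x where "x = y - s0"
        have bs: "b0 = a0 + 2 * s0" unfolding s0_def by (simp add: field_simps)
        have nn: "0 \<le> real n * s0" using s0_pos by simp
        have y1: "a0 \<le> x - s0" unfolding x_def using False bs nn by linarith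
        have xs1: "x - s0 \<in> J" using betw[OF a0 yJ] y1 s0_pos unfolding x_def by simp
        have xs2: "x + s0 \<in> J" unfolding x_def using yJ by simp
        have xJ: "x \<in> J" using betw[OF xs1 xs2] s0_pos by simp
        have "Q (x - s0) + Q (x + s0) = CC s0 * Q x" using Crel[OF s0_pos _ xs1 xs2 Q] by simp
        moreover have "\<psi> (x - s0) + \<psi> (x + s0) = CC s0 * \<psi> x" using \<psi>rel p1 by simp
        moreover have le1: "x - s0 \<le> b0 + real n * s0" and le2: "x \<le> b0 + real n * s0"
          using yb s0_pos unfolding x_def by (auto simp: algebra_simps)
        moreover have "Q (x - s0) = \<psi> (x - s0)" using Suc.IH xs1 y1 le1 by blast
        moreover have "Q x = \<psi> x" using Suc.IH xJ y1 le2 s0_pos by auto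
        ultimately have "Q (x + s0) = \<psi> (x + s0)" by simp
        thus ?thesis unfolding x_def by simp
      qed
    qed
  qed
  have left: "\<forall>y\<in>J. a0 - real n * s0 \<le> y \<longrightarrow> y \<le> b0 \<longrightarrow> Q y = \<psi> y" for n
  proof (induction n)
    case 0 thus ?case using seg by simp
  next
    case (Suc n)
    show ?case
    proof (intro ballI impI)
      fix y assume yJ: "y \<in> J" and ya: "a0 - real (Suc n) * s0 \<le> y" and yb: "y \<le> b0"
      show "Q y = \<psi> y"
      proof (cases "a0 - real n * s0 \<le> y")
        case True thus ?thesis using Suc.IH yJ yb by simp
      next
        case False
        define x where "x = y + s0"
        have bs: "b0 = a0 + 2 * s0" unfolding s0_def by (simp add: field_simps)
        have nn: "0 \<le> real n * s0" using s0_pos by simp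
        have y1: "x + s0 \<le> b0" unfolding x_def using False bs nn by linarith
        have xs2: "x + s0 \<in> J" using betw[OF yJ b0] y1 s0_pos unfolding x_def by simp
        have xs1: "x - s0 \<in> J" unfolding x_def using yJ by simp
        have xJ: "x \<in> J" using betw[OF xs1 xs2] s0_pos by simp
        have "Q (x - s0) + Q (x + s0) = CC s0 * Q x" using Crel[OF s0_pos _ xs1 xs2 Q] by simp
        moreover have "\<psi> (x - s0) + \<psi> (x + s0) = CC s0 * \<psi> x" using \<psi>rel p1 by simp
        moreover have ge1: "a0 - real n * s0 \<le> x + s0" and ge2: "a0 - real n * s0 \<le> x"
          using ya s0_pos unfolding x_def by (auto simp: algebra_simps)
        moreover have "Q (x + s0) = \<psi> (x + s0)" using Suc.IH xs2 y1 ge1 by blast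
        moreover have "Q x = \<psi> x" using Suc.IH xJ y1 ge2 s0_pos by auto
        ultimately have "Q (x - s0) = \<psi> (x - s0)" by simp
        thus ?thesis unfolding x_def by simp
      qed
    qed
  qed
  have "Q y = \<psi> y" if yJ: "y \<in> J" for y
  proof (cases "a0 \<le> y")
    case True
    obtain n :: nat where "(y - b0)/s0 \<le> real n" using real_arch_simple by blast
    hence "y \<le> b0 + real n * s0" using s0_pos by (simp add: divide_le_eq algebra_simps)
    thus ?thesis using right[of n] yJ True by blast
  next
    case False
    obtain n :: nat where "(a0 - y)/s0 \<le> real n" using real_arch_simple by blast
    hence "a0 - real n * s0 \<le> y" using s0_pos by (simp add: divide_le_eq algebra_simps)
    thus ?thesis using left[of n] yJ False ab0 by simp
  qed
  thus ?thesis unfolding \<psi>_def by blast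
qed

lemma case_half:
  "\<exists>p. \<exists>\<alpha>1 \<beta>1 \<alpha>2 \<beta>2. \<forall>u\<in>J. F u = \<alpha>1 * S_fun p u + \<beta>1 * C_fun p u \<and>
                                   G u = \<alpha>2 * S_fun p u + \<beta>2 * C_fun p u"
proof -
  have "0 < CC s0 / 2" using CC_pos[OF s0_pos] by simp
  then obtain p where p1: "C_fun p s0 = CC s0 / 2" and p2: "\<forall>s. 0 \<le> s \<longrightarrow> s \<le> s0 \<longrightarrow> 0 < C_fun p s"
    and p3: "S_fun p (2 * s0) \<noteq> 0"
    using choose_p[OF s0_pos] by blast
  have p1': "2 * C_fun p s0 = CC s0" using p1 by simp
  obtain \<alpha>1 \<beta>1 where 1: "\<forall>x\<in>J. F x = \<alpha>1 * S_fun p x + \<beta>1 * C_fun p x"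
    using rep[of F p] p1' p2 p3 by blast
  obtain \<alpha>2 \<beta>2 where 2: "\<forall>x\<in>J. G x = \<alpha>2 * S_fun p x + \<beta>2 * C_fun p x"
    using rep[of G p] p1' p2 p3 by blast
  show ?thesis using 1 2 by blast
qed

end

lemma core_result:
  assumes "core J F G K t a0 b0"
  shows "\<exists>p. (t - 1/2) * p = 0 \<and> (\<exists>\<alpha>1 \<beta>1 \<alpha>2 \<beta>2. \<forall>u\<in>J. F u = \<alpha>1 * S_fun p u + \<beta>1 * C_fun p u \<and>
                                   G u = \<alpha>2 * S_fun p u + \<beta>2 * C_fun p u)"
proof (cases "t = 1/2")
  case True
  interpret half J F G K t a0 b0
    unfolding half_def half_axioms_def using assms True by blast
  show ?thesis using case_half True by simp
next
  case False
  interpret core J F G K t a0 b0 by fact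
  show ?thesis using case_not_half[OF False] by (intro exI[of _ 0]) simp
qed


lemma strict_inj:
  fixes f :: "real \<Rightarrow> real"
  assumes "strict_mono_on A f \<or> strict_antimono_on A f"
  shows "inj_on f A"
proof (rule inj_onI, rule ccontr)
  fix x y assume xy: "x \<in> A" "y \<in> A" "f x = f y" "x \<noteq> y"
  show False
  proof (cases "x < y")
    case True thus False using assms xy unfolding monotone_on_def by force
  next
    case False hence "y < x" using xy by simp
    thus False using assms xy unfolding monotone_on_def by force
  qed
qed

lemma wmean_between:
  fixes A B p1 p2 :: real
  assumes "0 < A" "0 < B"
  shows "min p1 p2 \<le> (A*p1 + B*p2)/(A+B) \<and> (A*p1+B*p2)/(A+B) \<le> max p1 p2"
proof -
  have "A * min p1 p2 + B * min p1 p2 \<le> A*p1 + B*p2"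
    using assms by (intro add_mono mult_left_mono) auto
  moreover have "A*p1 + B*p2 \<le> A * max p1 p2 + B * max p1 p2"
    using assms by (intro add_mono mult_left_mono) auto
  ultimately show ?thesis using assms by (simp add: field_simps)
qed

lemma mk_pair_equiv:
  fixes f g U V :: "real \<Rightarrow> real"
  assumes rep: "\<forall>x\<in>I. f x = \<alpha>1 * U x + \<beta>1 * V x \<and> g x = \<alpha>2 * U x + \<beta>2 * V x"
    and fpos: "\<forall>x\<in>I. f x > 0" and x12: "x1 \<in> I" "x2 \<in> I" and k: "g x1 / f x1 \<noteq> g x2 / f x2"
  shows "pair_equiv I f g U V"
proof -
  define det where "det = \<alpha>1 * \<beta>2 - \<alpha>2 * \<beta>1"
  have det: "det \<noteq> 0"
  proof
    assume d0: "det = 0"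
    obtain r s where rs: "(r, s) \<noteq> (0, 0)" and lin: "\<forall>x\<in>I. r * f x + s * g x = 0"
    proof (cases "\<alpha>1 = 0 \<and> \<alpha>2 = 0")
      case True
      show ?thesis
      proof (cases "\<beta>1 = 0 \<and> \<beta>2 = 0")
        case True
        hence "f x1 = 0" using rep x12 \<open>\<alpha>1 = 0 \<and> \<alpha>2 = 0\<close> by simp
        thus ?thesis using fpos x12 by auto
      next
        case False
        show ?thesis
        proof (rule that[of "\<beta>2" "- \<beta>1"])
          show "(\<beta>2, - \<beta>1) \<noteq> (0, 0)" using False by auto
          show "\<forall>x\<in>I. \<beta>2 * f x + - \<beta>1 * g x = 0" using rep True by (simp add: algebra_simps)
        qed
      qed
    next
      case False
      show ?thesis
      proof (rule that[of "\<alpha>2" "- \<alpha>1"])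
        show "(\<alpha>2, - \<alpha>1) \<noteq> (0, 0)" using False by auto
        have "\<alpha>2 * \<beta>1 = \<alpha>1 * \<beta>2" using d0 unfolding det_def by simp
        thus "\<forall>x\<in>I. \<alpha>2 * f x + - \<alpha>1 * g x = 0" using rep by (simp add: algebra_simps)
      qed
    qed
    show False
    proof (cases "s = 0")
      case True
      hence "r \<noteq> 0" using rs by simp
      hence "f x1 = 0" using lin x12 True by simp
      thus False using fpos x12 by auto
    next
      case False
      have "g x / f x = - r / s" if "x \<in> I" for x
      proof -
        have "r * f x + s * g x = 0" using lin that by blast
        hence "s * g x = - r * f x" by linarith
        moreover have "f x \<noteq> 0" using fpos that by auto
        ultimately show ?thesis using False by (simp add: field_simps)
      qed
      thus False using k x12 by simp
    qed
  qed
  have U: "U x = (\<beta>2/det) * f x + (- \<beta>1/det) * g x" if "x \<in> I" for x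
  proof -
    have "\<beta>2 * f x - \<beta>1 * g x = det * U x" using rep that unfolding det_def by (simp add: algebra_simps)
    thus ?thesis using det by (simp add: field_simps)
  qed
  have V: "V x = (- \<alpha>2/det) * f x + (\<alpha>1/det) * g x" if "x \<in> I" for x
  proof -
    have "\<alpha>1 * g x - \<alpha>2 * f x = det * V x" using rep that unfolding det_def by (simp add: algebra_simps)
    thus ?thesis using det by (simp add: field_simps)
  qed
  have "(\<beta>2/det) * (\<alpha>1/det) - (- \<alpha>2/det) * (- \<beta>1/det) = (\<alpha>1 * \<beta>2 - \<alpha>2 * \<beta>1)/(det*det)"
    using det by (simp add: field_simps)
  also have "\<dots> = 1 / det" unfolding det_def[symmetric] using det by simp
  finally have "(\<beta>2/det) * (\<alpha>1/det) - (- \<alpha>2/det) * (- \<beta>1/det) = 1 / det" .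
  hence "(\<beta>2/det) * (\<alpha>1/det) \<noteq> (- \<alpha>2/det) * (- \<beta>1/det)" using det by auto
  thus ?thesis unfolding pair_equiv_def using U V by blast
qed

lemma S_comb_zero:
  assumes "(t - 1/2) * p = 0"
  shows "t * S_fun p (t*X + (1-t)*Y - X) + (1-t) * S_fun p (t*X + (1-t)*Y - Y) = 0"
proof (cases "p = 0")
  case True thus ?thesis unfolding S_fun_def by (simp add: algebra_simps)
next
  case False
  hence t: "t = 1/2" using assms by simp
  define D where "D = t*X + (1-t)*Y - Y"
  have "t*X + (1-t)*Y - X = - D" unfolding D_def t by (simp add: algebra_simps)
  hence "S_fun p (t*X + (1-t)*Y - X) = - S_fun p D" using S_odd by simp
  hence "t * S_fun p (t*X + (1-t)*Y - X) + (1-t) * S_fun p D = 0" unfolding t by simp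
  thus ?thesis unfolding D_def .
qed

theorem corollary3p2:
  fixes I :: "real set" and t :: real and f g h :: "real \<Rightarrow> real"
  assumes "is_interval I" and "open I" and "I \<noteq> {}"
    and "0 < t" and "t < 1"
    and "\<forall>x\<in>I. f x > 0"
    and "continuous_on I (\<lambda>x. g x / f x)"
    and "strict_mono_on I (\<lambda>x. g x / f x) \<or> strict_antimono_on I (\<lambda>x. g x / f x)"
    and "continuous_on I h"
    and "strict_mono_on I h \<or> strict_antimono_on I h"
  shows "(\<forall>x\<in>I. \<forall>y\<in>I.
            the_inv_into I (\<lambda>z. g z / f z)
              ((t * g x + (1 - t) * g y) / (t * f x + (1 - t) * f y))
            = the_inv_into I h (t * h x + (1 - t) * h y))
         \<longleftrightarrow> (\<exists>p::real. (t - 1/2) * p = 0 \<and>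
                 pair_equiv I f g (\<lambda>x. S_fun p (h x)) (\<lambda>x. C_fun p (h x)))"
proof -
  note I_int = assms(1) and I_open = assms(2) and I_ne = assms(3) and t0 = assms(4) and t1 = assms(5)
    and fpos = assms(6) and kcont = assms(7) and kmono = assms(8) and hcont = assms(9) and hmono = assms(10)
  define k where "k = (\<lambda>z. g z / f z)"
  have kinj: "inj_on k I" unfolding k_def using strict_inj[OF kmono] .
  have hinj: "inj_on h I" using strict_inj[OF hmono] .
  have kcont': "continuous_on I k" unfolding k_def using kcont .
  obtain x0 where x0: "x0 \<in> I" using I_ne by blast
  obtain \<epsilon> where \<epsilon>: "\<epsilon> > 0" "ball x0 \<epsilon> \<subseteq> I" using I_open x0 open_contains_ball by blast
  define x1 where "x1 = x0 + \<epsilon>/2"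
  have x1: "x1 \<in> I" using \<epsilon> unfolding x1_def by (auto simp: dist_real_def)
  have x01: "x0 \<noteq> x1" unfolding x1_def using \<epsilon> by simp
  define J where "J = h ` I"
  have J_int: "is_interval J" unfolding J_def is_interval_connected_1
    by (rule connected_continuous_image[OF hcont]) (use I_int is_interval_connected_1 in blast)
  have kI_int: "is_interval (k ` I)" unfolding is_interval_connected_1
    by (rule connected_continuous_image[OF kcont']) (use I_int is_interval_connected_1 in blast)
  define hinv where "hinv = the_inv_into I h"
  have hinv_in: "hinv u \<in> I" if "u \<in> J" for u
    unfolding hinv_def using the_inv_into_into[OF hinj, of u I] that unfolding J_def by blast
  have h_hinv: "h (hinv u) = u" if "u \<in> J" for u
    unfolding hinv_def using f_the_inv_into_f[OF hinj] that unfolding J_def by blast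
  have hinv_h: "hinv (h x) = x" if "x \<in> I" for x
    unfolding hinv_def using the_inv_into_f_f[OF hinj that] .
  have hinv_cont: "continuous_on J hinv"
  proof (rule continuous_at_imp_continuous_on, rule ballI)
    fix u assume "u \<in> J"
    then obtain x where x: "x \<in> I" "u = h x" unfolding J_def by blast
    obtain d where d: "d > 0" "cball x d \<subseteq> I" using I_open x open_contains_cball by blast
    have inI: "z \<in> I" if "\<bar>z - x\<bar> \<le> d" for z
      using d that by (auto simp: dist_real_def abs_minus_commute)
    have "isCont hinv (h x)"
    proof (rule isCont_inverse_function[where f = h and g = hinv and x = x, OF d(1)])
      fix z :: real assume "\<bar>z - x\<bar> \<le> d"
      hence zI: "z \<in> I" by (rule inI)
      show "hinv (h z) = z" using hinv_h[OF zI] .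
      show "isCont h z" using hcont I_open zI continuous_on_eq_continuous_at by blast
    qed
    thus "isCont hinv u" using x by simp
  qed
  show ?thesis
  proof
    assume H: "\<forall>x\<in>I. \<forall>y\<in>I.
            the_inv_into I (\<lambda>z. g z / f z)
              ((t * g x + (1 - t) * g y) / (t * f x + (1 - t) * f y))
            = the_inv_into I h (t * h x + (1 - t) * h y)"
    define F where "F u = f (hinv u)" for u
    define G where "G u = g (hinv u)" for u
    define K where "K u = k (hinv u)" for u
    define a0 where "a0 = min (h x0) (h x1)"
    define b0 where "b0 = max (h x0) (h x1)"
    have hne: "h x0 \<noteq> h x1" using hinj x0 x1 x01 unfolding inj_on_def by blast
    have core: "core J F G K t a0 b0"
    proof
      show "is_interval J" by fact
      show "0 < F u" if "u \<in> J" for u unfolding F_def using fpos hinv_in[OF that] by blast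
      show "G u = K u * F u" if "u \<in> J" for u
        unfolding G_def K_def F_def k_def using fpos hinv_in[OF that] by force
      show "inj_on K J"
      proof (rule inj_onI)
        fix u v assume uv: "u \<in> J" "v \<in> J" "K u = K v"
        hence "hinv u = hinv v" using kinj hinv_in unfolding K_def inj_on_def by blast
        thus "u = v" using h_hinv uv by metis
      qed
      show "continuous_on J K" unfolding K_def
        by (rule continuous_on_compose2[OF kcont' hinv_cont]) (use hinv_in in blast)
      show "0 < t" "t < 1" by fact+
      show "a0 \<in> J" "b0 \<in> J" unfolding a0_def b0_def J_def using x0 x1 by (auto simp: min_def max_def)
      show "a0 < b0" unfolding a0_def b0_def using hne by auto
      fix u v assume u: "u \<in> J" and v: "v \<in> J"
      define x where "x = hinv u"
      define y where "y = hinv v"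
      have x: "x \<in> I" and y: "y \<in> I" unfolding x_def y_def using hinv_in u v by auto
      have hx: "h x = u" and hy: "h y = v" unfolding x_def y_def using h_hinv u v by auto
      define z where "z = (t * g x + (1 - t) * g y) / (t * f x + (1 - t) * f y)"
      have A: "0 < t * f x" and B: "0 < (1-t) * f y" using t0 t1 fpos x y by auto
      have gk: "g x = k x * f x" "g y = k y * f y" unfolding k_def using fpos x y by auto
      have zeq: "z = (t * f x * k x + (1-t) * f y * k y) / (t * f x + (1-t) * f y)"
        unfolding z_def gk by (simp add: algebra_simps)
      have zb: "min (k x) (k y) \<le> z \<and> z \<le> max (k x) (k y)"
        unfolding zeq using wmean_between[OF A B, of "k x" "k y"] by (simp add: algebra_simps)
      have kxI: "k x \<in> k ` I" and kyI: "k y \<in> k ` I" using x y by auto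
      have zk: "z \<in> k ` I"
      proof (cases "k x \<le> k y")
        case True thus ?thesis using mem_is_interval_1_I[OF kI_int kxI kyI, of z] zb by auto
      next
        case False thus ?thesis using mem_is_interval_1_I[OF kI_int kyI kxI, of z] zb by auto
      qed
      have "the_inv_into I k z = hinv (t * u + (1 - t) * v)"
        using H x y hx hy unfolding hinv_def k_def z_def by metis
      hence "k (hinv (t * u + (1 - t) * v)) = z" using f_the_inv_into_f[OF kinj zk] by simp
      hence Kw: "K (t * u + (1 - t) * v) = z" unfolding K_def .
      have "z * (t * f x + (1 - t) * f y) = t * g x + (1 - t) * g y"
        unfolding z_def using A B by simp
      thus "t * G u + (1 - t) * G v = K (t * u + (1 - t) * v) * (t * F u + (1 - t) * F v)"
        unfolding Kw G_def F_def x_def[symmetric] y_def[symmetric] by simp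
    qed
    obtain p \<alpha>1 \<beta>1 \<alpha>2 \<beta>2 where p: "(t - 1/2) * p = 0"
      and rep: "\<forall>u\<in>J. F u = \<alpha>1 * S_fun p u + \<beta>1 * C_fun p u \<and> G u = \<alpha>2 * S_fun p u + \<beta>2 * C_fun p u"
      using core_result[OF core] by blast
    have rep': "\<forall>x\<in>I. f x = \<alpha>1 * S_fun p (h x) + \<beta>1 * C_fun p (h x) \<and> g x = \<alpha>2 * S_fun p (h x) + \<beta>2 * C_fun p (h x)"
    proof
      fix x assume x: "x \<in> I"
      have "h x \<in> J" unfolding J_def using x by blast
      thus "f x = \<alpha>1 * S_fun p (h x) + \<beta>1 * C_fun p (h x) \<and> g x = \<alpha>2 * S_fun p (h x) + \<beta>2 * C_fun p (h x)"
        using rep hinv_h[OF x] unfolding F_def G_def by force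
    qed
    have "g x0 / f x0 \<noteq> g x1 / f x1" using kinj x0 x1 x01 unfolding k_def inj_on_def by blast
    hence "pair_equiv I f g (\<lambda>x. S_fun p (h x)) (\<lambda>x. C_fun p (h x))"
      by (intro mk_pair_equiv[OF rep' fpos x0 x1])
    thus "\<exists>p::real. (t - 1/2) * p = 0 \<and> pair_equiv I f g (\<lambda>x. S_fun p (h x)) (\<lambda>x. C_fun p (h x))"
      using p by blast
  next
    assume "\<exists>p::real. (t - 1/2) * p = 0 \<and> pair_equiv I f g (\<lambda>x. S_fun p (h x)) (\<lambda>x. C_fun p (h x))"
    then obtain p a b c d where p: "(t - 1/2) * p = 0" and det: "a * d \<noteq> c * b"
      and pe: "\<forall>x\<in>I. S_fun p (h x) = a * f x + b * g x \<and> C_fun p (h x) = c * f x + d * g x"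
      unfolding pair_equiv_def by blast
    show "\<forall>x\<in>I. \<forall>y\<in>I.
            the_inv_into I (\<lambda>z. g z / f z)
              ((t * g x + (1 - t) * g y) / (t * f x + (1 - t) * f y))
            = the_inv_into I h (t * h x + (1 - t) * h y)"
    proof (intro ballI)
      fix x y assume x: "x \<in> I" and y: "y \<in> I"
      define U where "U = t * h x + (1 - t) * h y"
      have UJ: "U \<in> J" unfolding U_def J_def
        using interval_comb[OF J_int[unfolded J_def], of "h x" "h y" t] x y t0 t1 by auto
      define m where "m = hinv U"
      have m: "m \<in> I" and hm: "h m = U" unfolding m_def using hinv_in h_hinv UJ by auto
      have iden: "t * S_fun p (U - h x) + (1-t) * S_fun p (U - h y)
         = (a * d - c * b) * (f m * (t * g x + (1 - t) * g y) - g m * (t * f x + (1 - t) * f y))"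
      proof -
        have "t * S_fun p (U - h x) + (1-t) * S_fun p (U - h y)
          = t * (S_fun p (h m) * C_fun p (h x) - C_fun p (h m) * S_fun p (h x))
            + (1-t) * (S_fun p (h m) * C_fun p (h y) - C_fun p (h m) * S_fun p (h y))"
          unfolding SC_det hm ..
        also have "\<dots> = (a * d - c * b) * (f m * (t * g x + (1 - t) * g y) - g m * (t * f x + (1 - t) * f y))"
          using pe m x y by (simp add: algebra_simps)
        finally show ?thesis .
      qed
      have "t * S_fun p (U - h x) + (1-t) * S_fun p (U - h y) = 0"
        unfolding U_def by (rule S_comb_zero[OF p])
      hence "f m * (t * g x + (1 - t) * g y) = g m * (t * f x + (1 - t) * f y)"
        using iden det by simp
      moreover have "0 < t * f x + (1 - t) * f y" using t0 t1 fpos x y by (simp add: add_pos_pos)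
      moreover have "0 < f m" using fpos m by blast
      ultimately have "k m = (t * g x + (1 - t) * g y) / (t * f x + (1 - t) * f y)"
        unfolding k_def by (simp add: field_simps)
      hence "the_inv_into I k ((t * g x + (1 - t) * g y) / (t * f x + (1 - t) * f y)) = m"
        by (rule the_inv_into_f_eq[OF kinj _ m])
      thus "the_inv_into I (\<lambda>z. g z / f z) ((t * g x + (1 - t) * g y) / (t * f x + (1 - t) * f y))
            = the_inv_into I h (t * h x + (1 - t) * h y)"
        unfolding k_def m_def hinv_def U_def .
    qed
  qed
qed

end
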